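(* Let $q$ be an odd prime power, $\omega$ a non-square in $\mathbb F_q$, $\epsilon\in\mathbb F_{q^2}$ with $\epsilon^2=\omega$, and write $z=z_1+\epsilon z_2$ ($z_i\in\mathbb F_q$) for $z\in\mathbb F_{q^2}$. Let $\mathcal C: aX^2+bXY+cXZ+dYZ+eZ^2=0$ be a non-singular conic of $\mathrm{PG}(2,q^2)$ with $b\ne0$ and $b_1d_2=b_2d_1$ (i.e. $d/b\in\mathbb F_q$), and assume $(b_1,d_1)\neq(0,0)$. Then the line of $\mathrm{PG}(2,q)$ with equation $b_1X+d_1Z=0$ is the tangent line to $\mathcal C$ at the point $(0:1:0)$; in particular it contains exactly $q$ points of $\mathrm{PG}(2,q)$ external to $\mathcal C$.
   Context: $\mathrm{PG}(2,q)$ is canonically embedded in $\mathrm{PG}(2,q^2)$. A point not on $\mathcal C$ is external if it lies on two tangent lines to $\mathcal C$. The condition $(b_1,d_1)\ne(0,0)$ is the implicit requirement that $b_1X+d_1Z=0$ define a line. *)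

theory Defs
  imports Main "HOL-Computational_Algebra.Primes"
begin

type_synonym 'a vec3 = "'a \<times> 'a \<times> 'a"

definition proj_pt :: "'a::field vec3 \<Rightarrow> 'a vec3 set" where
  "proj_pt v = (case v of (x, y, z) \<Rightarrow> {(c * x, c * y, c * z) | c. c \<noteq> 0})"

text \<open>Points of PG(2,K) for a subfield K (given as a set) of the field 'a:
points having a representative with all coordinates in K.\<close>
definition PG2 :: "'a::field set \<Rightarrow> 'a vec3 set set" where
  "PG2 K = {proj_pt (x, y, z) | x y z. x \<in> K \<and> y \<in> K \<and> z \<in> K \<and> (x, y, z) \<noteq> (0, 0, 0)}"

definition line_of :: "'a::field vec3 \<Rightarrow> 'a vec3 set set" where
  "line_of l = (case l of (l1, l2, l3) \<Rightarrow>
     {proj_pt (x, y, z) | x y z. (x, y, z) \<noteq> (0, 0, 0) \<and> l1 * x + l2 * y + l3 * z = 0})"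

definition conic_form :: "'a::field \<Rightarrow> 'a \<Rightarrow> 'a \<Rightarrow> 'a \<Rightarrow> 'a \<Rightarrow> 'a vec3 \<Rightarrow> 'a" where
  "conic_form a b c d e v = (case v of (x, y, z) \<Rightarrow>
     a * x^2 + b * x * y + c * x * z + d * y * z + e * z^2)"

definition conic_grad :: "'a::field \<Rightarrow> 'a \<Rightarrow> 'a \<Rightarrow> 'a \<Rightarrow> 'a \<Rightarrow> 'a vec3 \<Rightarrow> 'a vec3" where
  "conic_grad a b c d e v = (case v of (x, y, z) \<Rightarrow>
     (2 * a * x + b * y + c * z, b * x + d * z, c * x + d * y + 2 * e * z))"

definition conic_pts :: "'a::field \<Rightarrow> 'a \<Rightarrow> 'a \<Rightarrow> 'a \<Rightarrow> 'a \<Rightarrow> 'a vec3 set set" where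
  "conic_pts a b c d e = {proj_pt v | v. v \<noteq> (0, 0, 0) \<and> conic_form a b c d e v = 0}"

definition conic_nonsingular :: "'a::field \<Rightarrow> 'a \<Rightarrow> 'a \<Rightarrow> 'a \<Rightarrow> 'a \<Rightarrow> bool" where
  "conic_nonsingular a b c d e \<longleftrightarrow>
     \<not> (\<exists>v. v \<noteq> (0, 0, 0) \<and> conic_form a b c d e v = 0 \<and> conic_grad a b c d e v = (0, 0, 0))"

definition tangent_at :: "'a::field \<Rightarrow> 'a \<Rightarrow> 'a \<Rightarrow> 'a \<Rightarrow> 'a \<Rightarrow> 'a vec3 \<Rightarrow> 'a vec3 set set" where
  "tangent_at a b c d e v = line_of (conic_grad a b c d e v)"

definition tangent_lines :: "'a::field \<Rightarrow> 'a \<Rightarrow> 'a \<Rightarrow> 'a \<Rightarrow> 'a \<Rightarrow> 'a vec3 set set set" where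
  "tangent_lines a b c d e =
     {tangent_at a b c d e v | v. v \<noteq> (0, 0, 0) \<and> conic_form a b c d e v = 0}"

definition external_pt :: "'a::field \<Rightarrow> 'a \<Rightarrow> 'a \<Rightarrow> 'a \<Rightarrow> 'a \<Rightarrow> 'a vec3 set \<Rightarrow> bool" where
  "external_pt a b c d e P \<longleftrightarrow> P \<in> PG2 UNIV \<and> P \<notin> conic_pts a b c d e \<and>
     card {T \<in> tangent_lines a b c d e. P \<in> T} = 2"

end

theory Submission
  imports Defs "HOL-Number_Theory.Residues" "HOL-Computational_Algebra.Polynomial"
begin

lemma proj_self: "(x,y,z) \<in> proj_pt (x,y,z)"
  unfolding proj_pt_def by (auto intro!: exI[of _ 1])

lemma proj_eq:
  assumes "proj_pt (x,y,z) = proj_pt (x',y',z')"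
  shows "\<exists>s. s \<noteq> 0 \<and> x = s*x' \<and> y = s*y' \<and> z = s*z'"
proof -
  have "(x,y,z) \<in> proj_pt (x',y',z')" using proj_self[of x y z] assms by simp
  then show ?thesis unfolding proj_pt_def by blast
qed

lemma proj_scale:
  assumes "s \<noteq> 0"
  shows "proj_pt (s*x, s*y, s*z) = proj_pt (x,y,z)"
proof -
  have "\<exists>c'. c' \<noteq> 0 \<and> c * (s * x) = c' * x \<and> c * (s * y) = c' * y \<and> c * (s * z) = c' * z" if "c \<noteq> 0" for c
    using that assms by (intro exI[of _ "c*s"]) (auto simp: mult.assoc)
  moreover have "\<exists>c'. c' \<noteq> 0 \<and> c * x = c' * (s * x) \<and> c * y = c' * (s * y) \<and> c * z = c' * (s * z)" if "c \<noteq> 0" for c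
    using that assms by (intro exI[of _ "c/s"]) (auto simp: field_simps)
  ultimately show ?thesis unfolding proj_pt_def by fastforce
qed

lemma mem_line:
  assumes "(x,y,z) \<noteq> (0,0,0)"
  shows "proj_pt (x,y,z) \<in> line_of (l1,l2,l3) \<longleftrightarrow> l1*x + l2*y + l3*z = 0"
proof
  assume "proj_pt (x,y,z) \<in> line_of (l1,l2,l3)"
  then obtain x' y' z' where h: "proj_pt (x,y,z) = proj_pt (x',y',z')" "l1*x' + l2*y' + l3*z' = 0"
    unfolding line_of_def by auto
  from proj_eq[OF h(1)] obtain s where "x = s*x'" "y = s*y'" "z = s*z'" by blast
  then have "l1*x + l2*y + l3*z = s*(l1*x' + l2*y' + l3*z')" by (simp add: algebra_simps)
  with h(2) show "l1*x + l2*y + l3*z = 0" by simp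
next
  assume "l1*x + l2*y + l3*z = 0"
  then show "proj_pt (x,y,z) \<in> line_of (l1,l2,l3)" using assms unfolding line_of_def by blast
qed

lemma line_scale:
  assumes "k \<noteq> 0"
  shows "line_of (k*l1, k*l2, k*l3) = line_of (l1,l2,l3)"
proof -
  have "k*l1*x + k*l2*y + k*l3*z = k*(l1*x + l2*y + l3*z)" for x y z
    by (simp add: algebra_simps)
  then show ?thesis unfolding line_of_def using assms by simp
qed

lemma tangent_scale:
  assumes "s \<noteq> 0"
  shows "tangent_at a b c d e (s*x, s*y, s*z) = tangent_at a b c d e (x,y,z)"
proof -
  have "conic_grad a b c d e (s*x, s*y, s*z) =
     (s*(2 * a * x + b * y + c * z), s*(b * x + d * z), s*(c * x + d * y + 2 * e * z))"
    unfolding conic_grad_def by (simp add: algebra_simps)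
  then show ?thesis unfolding tangent_at_def conic_grad_def using line_scale[OF assms] by simp
qed

lemma grad_dot:
  assumes "d = b*\<delta>"
  shows "(case conic_grad a b c d e (x,y,z) of (l1,l2,l3) \<Rightarrow> l1*(-\<delta>) + l2*t + l3*1)
     = (c - 2*a*\<delta> + t*b)*x + (2*e - c*\<delta> + t*b*\<delta>)*z"
  unfolding conic_grad_def using assms by (simp add: algebra_simps)

lemma external_main:
  fixes a b c d e \<delta> t :: "'a::field"
  assumes two: "(2::'a) \<noteq> 0" and b: "b \<noteq> 0" and dd: "d = b*\<delta>"
    and ns: "conic_nonsingular a b c d e"
  shows "external_pt a b c d e (proj_pt (-\<delta>, t, 1))"
proof -
  define k0 where "k0 = a*\<delta>^2 - c*\<delta> + e"
  have k0: "k0 \<noteq> 0"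
  proof
    assume "k0 = 0"
    then have ee: "e = c*\<delta> - a*\<delta>^2" unfolding k0_def by (simp add: algebra_simps)
    define v where "v = (-d*b, 2*a*d - c*b, b^2)"
    have "v \<noteq> (0,0,0)" using b unfolding v_def by simp
    moreover have "conic_form a b c d e v = 0"
      unfolding v_def conic_form_def dd ee by (simp add: algebra_simps power2_eq_square)
    moreover have "conic_grad a b c d e v = (0,0,0)"
      unfolding v_def conic_grad_def dd ee by (simp add: algebra_simps power2_eq_square)
    ultimately show False using ns unfolding conic_nonsingular_def by blast
  qed
  define A where "A = c - 2*a*\<delta> + t*b"
  define B where "B = 2*e - c*\<delta> + t*b*\<delta>"
  have AB: "A*\<delta> - B = -2*k0" unfolding A_def B_def k0_def by (simp add: algebra_simps power2_eq_square)
  define y0 where "y0 = -(a*B^2 - c*A*B + e*A^2)/(2*b*k0)"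
  define R where "R = (B, y0, -A)"
  define Q where "Q = (0::'a, 1::'a, 0::'a)"
  define P where "P = proj_pt (-\<delta>, t, 1)"
  have dot: "proj_pt (x,y,z) \<in> tangent_at a b c d e (x',y',z') \<longleftrightarrow> 
      (case conic_grad a b c d e (x',y',z') of (l1,l2,l3) \<Rightarrow> l1*x + l2*y + l3*z) = 0"
    if "(x,y,z) \<noteq> (0,0,0)" for x y z x' y' z'
    unfolding tangent_at_def using mem_line[OF that] by (simp split: prod.splits)
  have Pin: "P \<in> tangent_at a b c d e (x,y,z) \<longleftrightarrow> A*x + B*z = 0" for x y z
    unfolding P_def using dot[of "-\<delta>" t 1 x y z] grad_dot[OF dd, where a=a and c=c and e=e and x=x and y=y and z=z and t=t]
    by (simp add: A_def B_def)
  have ABnz: "\<not> (A = 0 \<and> B = 0)" using AB k0 two by auto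
  have FR: "conic_form a b c d e R = 0"
  proof -
    have "conic_form a b c d e R = (a*B^2 - c*A*B + e*A^2) + y0*(2*b*k0)"
      unfolding R_def conic_form_def k0_def dd B_def A_def by (simp add: algebra_simps power2_eq_square)
    also have "\<dots> = 0" unfolding y0_def using b k0 two by (simp add: field_simps)
    finally show ?thesis .
  qed
  have Rnz: "R \<noteq> (0,0,0)" using ABnz unfolding R_def by auto
  have FQ: "conic_form a b c d e Q = 0" unfolding Q_def conic_form_def by simp
  define TQ where "TQ = tangent_at a b c d e Q"
  define TR where "TR = tangent_at a b c d e R"
  have PTQ: "P \<in> TQ" unfolding TQ_def Q_def Pin by simp
  have PTR: "P \<in> TR" unfolding TR_def R_def Pin by (simp add: algebra_simps)
  have QTQ: "proj_pt Q \<in> TQ" unfolding TQ_def Q_def using dot[of 0 1 0 0 1 0]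
    by (simp add: conic_grad_def)
  have QTR: "proj_pt Q \<notin> TR"
  proof -
    have "b*B + d*(-A) = 2*b*k0" unfolding dd A_def B_def k0_def by (simp add: algebra_simps power2_eq_square)
    then show ?thesis unfolding TR_def Q_def R_def using dot[of 0 1 0 B y0 "-A"] b k0 two
      by (simp add: conic_grad_def)
  qed
  have neq: "TQ \<noteq> TR" using QTQ QTR by blast
  have set_eq: "{T \<in> tangent_lines a b c d e. P \<in> T} = {TQ, TR}"
  proof
    show "{TQ, TR} \<subseteq> {T \<in> tangent_lines a b c d e. P \<in> T}"
    proof -
      have "Q \<noteq> (0,0,0)" by (simp add: Q_def)
      then have "TQ \<in> tangent_lines a b c d e" unfolding tangent_lines_def TQ_def using FQ
        by blast
      moreover have "TR \<in> tangent_lines a b c d e" unfolding tangent_lines_def TR_def using FR Rnz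
        by blast
      ultimately show ?thesis using PTQ PTR by auto
    qed
  next
    show "{T \<in> tangent_lines a b c d e. P \<in> T} \<subseteq> {TQ, TR}"
    proof
      fix T assume "T \<in> {T \<in> tangent_lines a b c d e. P \<in> T}"
      then obtain x y z where T: "T = tangent_at a b c d e (x,y,z)" "(x,y,z) \<noteq> (0,0,0)"
        "conic_form a b c d e (x,y,z) = 0" "P \<in> T"
        unfolding tangent_lines_def by auto
      have lin: "A*x + B*z = 0" using T(1,4) Pin by simp
      show "T \<in> {TQ, TR}"
      proof (cases "x = 0 \<and> z = 0")
        case True
        then have "y \<noteq> 0" using T(2) by auto
        then have "T = TQ" using tangent_scale[of y a b c d e 0 1 0] True T(1)
          unfolding TQ_def Q_def by simp
        then show ?thesis by simp
      next
        case False
        define s where "s = (if B \<noteq> 0 then x/B else -z/A)"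
        have xs: "x = s*B" and zs: "z = -s*A"
        proof -
          have "x = s*B \<and> z = -s*A"
          proof (cases "B = 0")
            case True
            then have "A \<noteq> 0" using ABnz by simp
            then show ?thesis using True lin unfolding s_def by (simp add: field_simps)
          next
            case False
            have "B*z = -(A*x)" using lin[unfolded add.commute[of "A*x"] add_eq_0_iff2] .
            then have "z = -(A*x)/B" using False by (simp add: field_simps)
            then show ?thesis using False unfolding s_def by (simp add: field_simps)
          qed
          then show "x = s*B" "z = -s*A" by auto
        qed
        have s0: "s \<noteq> 0" using False xs zs by auto
        have "0 = conic_form a b c d e (x,y,z)" using T(3) by simp
        also have "\<dots> = s*(s*(a*B^2 - c*A*B + e*A^2) + y*(2*b*k0))"
          unfolding xs zs conic_form_def k0_def dd B_def A_def by (simp add: algebra_simps power2_eq_square)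
        finally have "s*(a*B^2 - c*A*B + e*A^2) + y*(2*b*k0) = 0" using s0 by simp
        then have ys: "y = s*y0" unfolding y0_def using b k0 two by (simp add: field_simps)
        have "T = TR" using T(1) tangent_scale[OF s0, of a b c d e B y0 "-A"]
          unfolding TR_def R_def xs zs ys by simp
        then show ?thesis by simp
      qed
    qed
  qed
  have notc: "P \<notin> conic_pts a b c d e"
  proof
    assume "P \<in> conic_pts a b c d e"
    then obtain x y z where v: "(x,y,z) \<noteq> (0,0,0)" "conic_form a b c d e (x,y,z) = 0"
      "proj_pt (x,y,z) = P" unfolding conic_pts_def by auto
    from proj_eq[OF v(3)[unfolded P_def]] obtain s where s: "s \<noteq> 0" "x = s*(-\<delta>)" "y = s*t" "z = s*1"
      by blast
    have "conic_form a b c d e (x,y,z) = s^2 * k0"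
      unfolding s conic_form_def k0_def dd by (simp add: algebra_simps power2_eq_square)
    with v(2) s k0 show False by simp
  qed
  have "P \<in> PG2 UNIV" unfolding PG2_def P_def by force
  then show ?thesis using notc set_eq neq unfolding external_pt_def P_def[symmetric] by simp
qed

lemma ff_char:
  fixes q p k :: nat
  assumes card: "card (UNIV :: 'a::{finite,field} set) = q^2" and p: "prime p" and k: "k > 0"
    and qp: "q = p^k"
  shows "CHAR('a) = p"
proof -
  have pc: "prime CHAR('a)"
    using prime_CHAR_semidom[where ?'a = 'a] finite_imp_CHAR_pos[OF finite_UNIV] by blast
  have "CHAR('a) dvd p^(k*2)" using CHAR_dvd_CARD[where ?'a='a] card qp by (simp add: power_mult)
  then have "CHAR('a) dvd p" using pc prime_dvd_power by blast
  then show ?thesis using pc p primes_dvd_imp_eq by blast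
qed

lemma ff_power_card:
  fixes x :: "'a::{finite,field}"
  shows "x ^ card (UNIV :: 'a set) = x"
proof (cases "x = 0")
  case False
  have "x * (\<Prod>y\<in>UNIV-{0}. x * y) = x * x ^ (card (UNIV :: 'a set) - 1) * \<Prod>(UNIV-{0})"
    by (simp add: prod.distrib mult_ac)
  also have "x * x ^ (card (UNIV :: 'a set) - 1) = x ^ Suc (card (UNIV :: 'a set) - 1)"
    by (subst power_Suc) auto
  also have "Suc (card (UNIV :: 'a set) - 1) = card (UNIV :: 'a set)"
    using finite_UNIV_card_ge_0[where ?'a = 'a] by simp
  also have "(\<Prod>y\<in>UNIV-{0}. x * y) = (\<Prod>y\<in>UNIV-{0}. y)"
    by (rule prod.reindex_bij_witness[of _ "\<lambda>y. y / x" "\<lambda>y. x * y"]) (use False in auto)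
  finally show ?thesis
    by simp
qed (use finite_UNIV_card_ge_0[where ?'a = 'a] in auto)

lemma roots_bound:
  fixes c :: "'a::field"
  assumes "q \<ge> 2"
  shows "card {x. x^q + c*x = 0} \<le> q"
proof -
  define P where "P = monom (1::'a) q + [:0, c:]"
  have dg: "degree P = q"
    unfolding P_def using assms
    by (subst degree_add_eq_left) (auto simp: degree_monom_eq degree_pCons_eq_if)
  have "P \<noteq> 0" using dg assms by auto
  moreover have "{x. poly P x = 0} = {x. x^q + c*x = 0}"
    unfolding P_def by (simp add: poly_monom mult.commute)
  ultimately show ?thesis using card_poly_roots_bound[of P] dg by simp
qed

lemma ff_subfield_card:
  fixes q p k :: nat
  assumes card: "card (UNIV :: 'a::{finite,field} set) = q^2" and p: "prime p" and k: "k > 0"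
    and qp: "q = p^k" and oq: "odd q"
  shows "card {x::'a. x^q = x} = q"
proof -
  have ch: "CHAR('a) = p" using ff_char assms by blast
  have pc: "prime CHAR('a)" using ch p by simp
  have add: "(x + y)^q = x^q + y^q" for x y :: 'a
    using freshmans_dream'[OF pc, of q k] qp ch by simp
  have sub: "(x - y)^q = x^q - y^q" for x y :: 'a
  proof -
    have "x^q = (x - y)^q + y^q" using add[of "x-y" y] by simp
    then show ?thesis by (simp add: algebra_simps)
  qed
  have q2: "q \<ge> 2"
  proof -
    have "p \<ge> 2" using p prime_ge_2_nat by blast
    moreover have "p \<le> q" using qp power_increasing[of 1 k p] k prime_ge_1_nat[OF p] by simp
    ultimately show ?thesis by simp
  qed
  define K where "K = {x::'a. x^q = x}"
  define phi where "phi = (\<lambda>x::'a. x^q - x)"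
  have K1: "card K \<le> q"
  proof -
    have "K = {x. x^q + (-1)*x = 0}" unfolding K_def by auto
    then show ?thesis using roots_bound[OF q2, of "-1::'a"] by simp
  qed
  have qq: "(x^q)^q = x" for x :: 'a
    using ff_power_card[of x] card by (simp add: power_mult power2_eq_square)
  have Im: "range phi \<subseteq> {u. u^q + 1*u = 0}"
  proof
    fix u assume "u \<in> range phi"
    then obtain x where "u = phi x" by blast
    then have "u^q = (x^q)^q - x^q" unfolding phi_def using sub by simp
    then show "u \<in> {u. u^q + 1*u = 0}" using qq \<open>u = phi x\<close> unfolding phi_def by simp
  qed
  have I1: "card (range phi) \<le> q"
    using card_mono[OF _ Im] roots_bound[OF q2, of "1::'a"] by (meson finite le_trans)
  have fib: "card {x. phi x = u} \<le> card K" if "u \<in> range phi" for u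
  proof -
    obtain x0 where x0: "u = phi x0" using \<open>u \<in> range phi\<close> by blast
    have "{x. phi x = u} \<subseteq> (\<lambda>k. k + x0) ` K"
    proof
      fix x assume "x \<in> {x. phi x = u}"
      then have "phi x = phi x0" using x0 by simp
      then have "(x - x0)^q = x - x0" unfolding phi_def sub by (simp add: algebra_simps)
      then have "x - x0 \<in> K" unfolding K_def by simp
      then show "x \<in> (\<lambda>k. k + x0) ` K" by (intro image_eqI[of _ _ "x - x0"]) auto
    qed
    then have "card {x. phi x = u} \<le> card ((\<lambda>k. k + x0) ` K)" by (intro card_mono) auto
    also have "\<dots> \<le> card K" by (rule card_image_le) simp
    finally show ?thesis .
  qed
  have "UNIV = (\<Union>u\<in>range phi. {x. phi x = u})" by auto
  then have "q^2 = card (\<Union>u\<in>range phi. {x. phi x = u})" using card by simp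
  also have "\<dots> \<le> (\<Sum>u\<in>range phi. card {x. phi x = u})" by (rule card_UN_le) simp
  also have "\<dots> \<le> (\<Sum>u\<in>range phi. card K)" by (rule sum_mono) (use fib in auto)
  also have "\<dots> = card (range phi) * card K" by simp
  also have "\<dots> \<le> q * card K" using I1 by simp
  finally have "q * q \<le> q * card K" by (simp add: power2_eq_square)
  then have "q \<le> card K" using q2 by simp
  with K1 show ?thesis unfolding K_def by simp
qed

lemma ff_two:
  fixes q p k :: nat
  assumes card: "card (UNIV :: 'a::{finite,field} set) = q^2" and p: "prime p" and k: "k > 0"
    and qp: "q = p^k" and oq: "odd q"
  shows "(2::'a) \<noteq> 0"
proof
  assume "(2::'a) = 0"
  then have "of_nat 2 = (0::'a)" by simp
  then have "CHAR('a) dvd 2" using of_nat_eq_0_iff_char_dvd by blast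
  then have "p dvd 2" using ff_char assms by metis
  then have "p = 2" using p by (metis prime_nat_iff two_is_prime_nat primes_dvd_imp_eq)
  then show False using oq qp k by simp
qed

theorem mainTheorem11:
  fixes q :: nat
    and \<omega> \<epsilon> a b c d e b1 b2 d1 d2 :: "'a::{finite, field}"
  assumes "card (UNIV :: 'a set) = q^2"
    and "\<exists>p k. prime p \<and> k > 0 \<and> q = p ^ k"
    and "odd q"
    and "\<omega>^q = \<omega>" and "\<not> (\<exists>y. y^q = y \<and> y^2 = \<omega>)"
    and "\<epsilon>^2 = \<omega>"
    and "b1^q = b1" and "b2^q = b2" and "d1^q = d1" and "d2^q = d2"
    and "b = b1 + \<epsilon> * b2" and "d = d1 + \<epsilon> * d2"
    and "conic_nonsingular a b c d e"
    and "b \<noteq> 0"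
    and "b1 * d2 = b2 * d1"
    and "(b1, d1) \<noteq> (0, 0)"
  shows "line_of (b1, 0, d1) = tangent_at a b c d e (0, 1, 0)
    \<and> card {P \<in> PG2 {x. x^q = x}. P \<in> line_of (b1, 0, d1) \<and> external_pt a b c d e P} = q"
proof -
  note card = assms(1) and oq = assms(3) and bb = assms(11) and ddef = assms(12)
    and ns = assms(13) and b0 = assms(14) and bd = assms(15) and bd0 = assms(16)
  obtain p k where pk: "prime p" "k > 0" "q = p^k" using assms(2) by blast
  have two: "(2::'a) \<noteq> 0" using ff_two[OF card pk oq] .
  define K where "K = {x::'a. x^q = x}"
  have cK: "card K = q" unfolding K_def using ff_subfield_card[OF card pk oq] .
  have b1: "b1 \<noteq> 0"
  proof
    assume "b1 = 0"
    then have "d1 \<noteq> 0" using bd0 by simp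
    then have "b2 = 0" using bd \<open>b1 = 0\<close> by simp
    then show False using b0 bb \<open>b1 = 0\<close> by simp
  qed
  define \<delta> where "\<delta> = d1 / b1"
  have dd: "d = b * \<delta>"
  proof -
    have "d2 = b2 * d1 / b1" using bd b1 by (simp add: field_simps)
    then show ?thesis unfolding ddef bb \<delta>_def using b1 by (simp add: field_simps)
  qed
  have dK: "-\<delta> \<in> K" unfolding K_def \<delta>_def using assms(7,9) oq
    by (simp add: power_divide power_minus_odd)
  have part1: "line_of (b1, 0, d1) = tangent_at a b c d e (0, 1, 0)"
  proof -
    have "tangent_at a b c d e (0, 1, 0) = line_of (b, 0, d)"
      unfolding tangent_at_def conic_grad_def by simp
    also have "\<dots> = line_of (b/b1 * b1, b/b1 * 0, b/b1 * d1)"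
      using b1 dd by (simp add: \<delta>_def)
    also have "\<dots> = line_of (b1, 0, d1)" using line_scale[of "b/b1" b1 0 d1] b0 b1 by simp
    finally show ?thesis by simp
  qed
  have Qc: "proj_pt (0,1,0) \<in> conic_pts a b c d e"
    unfolding conic_pts_def conic_form_def by force
  have S: "{P \<in> PG2 K. P \<in> line_of (b1, 0, d1) \<and> external_pt a b c d e P}
      = (\<lambda>t. proj_pt (-\<delta>, t, 1)) ` K"
  proof
    show "{P \<in> PG2 K. P \<in> line_of (b1, 0, d1) \<and> external_pt a b c d e P}
      \<subseteq> (\<lambda>t. proj_pt (-\<delta>, t, 1)) ` K"
    proof
      fix P assume "P \<in> {P \<in> PG2 K. P \<in> line_of (b1, 0, d1) \<and> external_pt a b c d e P}"
      then obtain x y z where P: "P = proj_pt (x,y,z)" "x \<in> K" "y \<in> K" "z \<in> K"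
        "(x,y,z) \<noteq> (0,0,0)" "P \<in> line_of (b1, 0, d1)" "external_pt a b c d e P"
        unfolding PG2_def by blast
      have lin: "b1*x + d1*z = 0" using P(6) mem_line[OF P(5)] P(1) by simp
      have z: "z \<noteq> 0"
      proof
        assume "z = 0"
        then have "x = 0" using lin b1 by simp
        then have "y \<noteq> 0" using P(5) \<open>z = 0\<close> by simp
        then have "P = proj_pt (0,1,0)" using P(1) proj_scale[of y 0 1 0] \<open>z = 0\<close> \<open>x = 0\<close> by simp
        then show False using P(7) Qc unfolding external_pt_def by simp
      qed
      have xz: "x / z = -\<delta>" unfolding \<delta>_def using lin b1 z by (simp add: field_simps add_eq_0_iff2)
      have "(z*(-\<delta>), z*(y/z), z*1) = (x,y,z)" using xz z by (simp add: field_simps)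
      then have "P = proj_pt (z*(-\<delta>), z*(y/z), z*1)" using P(1) by simp
      also have "\<dots> = proj_pt (-\<delta>, y/z, 1)" by (rule proj_scale[OF z])
      finally have "P = proj_pt (-\<delta>, y/z, 1)" .
      moreover have "y/z \<in> K" using P(3,4) unfolding K_def by (simp add: power_divide)
      ultimately show "P \<in> (\<lambda>t. proj_pt (-\<delta>, t, 1)) ` K" by blast
    qed
  next
    show "(\<lambda>t. proj_pt (-\<delta>, t, 1)) ` K
      \<subseteq> {P \<in> PG2 K. P \<in> line_of (b1, 0, d1) \<and> external_pt a b c d e P}"
    proof
      fix P assume "P \<in> (\<lambda>t. proj_pt (-\<delta>, t, 1)) ` K"
      then obtain t where t: "t \<in> K" "P = proj_pt (-\<delta>, t, 1)" by blast
      have "(1::'a) \<in> K" unfolding K_def by simp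
      then have "P \<in> PG2 K" unfolding PG2_def using t dK by force
      moreover have "P \<in> line_of (b1, 0, d1)" using t(2) mem_line[of "-\<delta>" t 1 b1 0 d1] b1
        by (simp add: \<delta>_def)
      moreover have "external_pt a b c d e P" using external_main[OF two b0 dd ns] t(2) by simp
      ultimately show "P \<in> {P \<in> PG2 K. P \<in> line_of (b1, 0, d1) \<and> external_pt a b c d e P}"
        by blast
    qed
  qed
  have inj: "inj_on (\<lambda>t. proj_pt (-\<delta>, t, 1)) K"
  proof
    fix t t' assume "proj_pt (-\<delta>, t, 1) = proj_pt (-\<delta>, t', 1)"
    from proj_eq[OF this] show "t = t'" by auto
  qed
  show ?thesis using part1 S inj cK card_image[OF inj] unfolding K_def by simp
qed

end
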